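(* Let $G$ be a connected graph on $n\ge 12$ vertices with $\gamma(G)\neq 2$. Then the parameters $dav(G,k_1,k_2,k_3)$ for all nonnegative integers $k_1,k_2,k_3$ with $0\le k_1+k_2+k_3\le n-3$, and $dav(G,k_1,k,k)$ for all nonnegative integers $k_1,k$ with $0\le k_1+2k\le n-3$, are reconstructible; that is, for every graph $H$ with $\mathscr{D}(H)=\mathscr{D}(G)$ these parameters take the same values on $H$ as on $G$.
   Context: All graphs are finite, simple and undirected; $\gamma(G)$ is the domination number. For a vertex $v$, the card $G-v$ is the unlabeled graph obtained by deleting $v$; the deck $\mathscr{D}(G)$ is the multiset of all cards. For nonnegative integers $k_1,k_2,k_3$, $dav(G,k_1,k_2,k_3)$ denotes the number of pairs of adjacent vertices $x$ and $y$ in $G$ such that exactly $k_1$ vertices are adjacent to both $x$ and $y$, exactly $k_2$ vertices other than $y$ are adjacent to $x$ but not to $y$, and exactly $k_3$ vertices other than $x$ are adjacent to $y$ but not to $x$. *)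

theory Defs
  imports Main
begin

definition simple_graph :: "'a set \<Rightarrow> ('a \<Rightarrow> 'a \<Rightarrow> bool) \<Rightarrow> bool" where
  "simple_graph V E \<longleftrightarrow> finite V \<and> (\<forall>x y. E x y \<longrightarrow> x \<in> V \<and> y \<in> V)
     \<and> (\<forall>x y. E x y \<longrightarrow> E y x) \<and> (\<forall>x. \<not> E x x)"

definition connected_graph :: "'a set \<Rightarrow> ('a \<Rightarrow> 'a \<Rightarrow> bool) \<Rightarrow> bool" where
  "connected_graph V E \<longleftrightarrow> (\<forall>x\<in>V. \<forall>y\<in>V. E\<^sup>*\<^sup>* x y)"

definition dominating_set :: "'a set \<Rightarrow> ('a \<Rightarrow> 'a \<Rightarrow> bool) \<Rightarrow> 'a set \<Rightarrow> bool" where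
  "dominating_set V E D \<longleftrightarrow> D \<subseteq> V \<and> (\<forall>v\<in>V. v \<in> D \<or> (\<exists>u\<in>D. E v u))"

definition domination_number :: "'a set \<Rightarrow> ('a \<Rightarrow> 'a \<Rightarrow> bool) \<Rightarrow> nat" where
  "domination_number V E = (LEAST k. \<exists>D. dominating_set V E D \<and> card D = k)"

definition graph_iso :: "'a set \<Rightarrow> ('a \<Rightarrow> 'a \<Rightarrow> bool) \<Rightarrow> 'b set \<Rightarrow> ('b \<Rightarrow> 'b \<Rightarrow> bool) \<Rightarrow> bool" where
  "graph_iso V E V' E' \<longleftrightarrow> (\<exists>f. bij_betw f V V' \<and> (\<forall>x\<in>V. \<forall>y\<in>V. E x y \<longleftrightarrow> E' (f x) (f y)))"

definition del_edges :: "('a \<Rightarrow> 'a \<Rightarrow> bool) \<Rightarrow> 'a \<Rightarrow> 'a \<Rightarrow> 'a \<Rightarrow> bool" where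
  "del_edges E v = (\<lambda>x y. E x y \<and> x \<noteq> v \<and> y \<noteq> v)"

text \<open>Equal decks: the multisets of (unlabeled) cards coincide, i.e. there is a
bijection of vertices matching each card of G with an isomorphic card of H.\<close>
definition same_deck :: "'a set \<Rightarrow> ('a \<Rightarrow> 'a \<Rightarrow> bool) \<Rightarrow> 'b set \<Rightarrow> ('b \<Rightarrow> 'b \<Rightarrow> bool) \<Rightarrow> bool" where
  "same_deck V E V' E' \<longleftrightarrow> (\<exists>f. bij_betw f V V' \<and>
     (\<forall>v\<in>V. graph_iso (V - {v}) (del_edges E v) (V' - {f v}) (del_edges E' (f v))))"

definition dav :: "'a set \<Rightarrow> ('a \<Rightarrow> 'a \<Rightarrow> bool) \<Rightarrow> nat \<Rightarrow> nat \<Rightarrow> nat \<Rightarrow> nat" where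
  "dav V E k1 k2 k3 = card {(x, y). x \<in> V \<and> y \<in> V \<and> E x y
      \<and> card {z \<in> V. E x z \<and> E y z} = k1
      \<and> card {z \<in> V. z \<noteq> y \<and> E x z \<and> \<not> E y z} = k2
      \<and> card {z \<in> V. z \<noteq> x \<and> E y z \<and> \<not> E x z} = k3}"

end

theory Submission
  imports Defs
begin

definition par :: "'a set \<Rightarrow> ('a \<Rightarrow> 'a \<Rightarrow> bool) \<Rightarrow> 'a \<Rightarrow> 'a \<Rightarrow> nat \<times> nat \<times> nat" where
  "par V E x y = (card {z \<in> V. E x z \<and> E y z}, card {z \<in> V. z \<noteq> y \<and> E x z \<and> \<not> E y z},
                  card {z \<in> V. z \<noteq> x \<and> E y z \<and> \<not> E x z})"

definition edges :: "'a set \<Rightarrow> ('a \<Rightarrow> 'a \<Rightarrow> bool) \<Rightarrow> ('a \<times> 'a) set" where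
  "edges V E = {(x,y). x \<in> V \<and> y \<in> V \<and> E x y}"

definition cnt :: "'a set \<Rightarrow> ('a \<Rightarrow> 'a \<Rightarrow> bool) \<Rightarrow> (nat \<times> nat \<times> nat \<Rightarrow> bool) \<Rightarrow> nat" where
  "cnt V E P = card {e \<in> edges V E. P (par V E (fst e) (snd e))}"

lemma dav_cnt: "dav V E k1 k2 k3 = cnt V E (\<lambda>p. p = (k1,k2,k3))"
  unfolding dav_def cnt_def edges_def par_def
  by (rule arg_cong[where f=card]) auto

lemma card_bij_filter:
  assumes "bij_betw g V V'"
  shows "card {z\<in>V'. Q z} = card {z\<in>V. Q (g z)}"
proof -
  have "{z\<in>V'. Q z} = g ` {z\<in>V. Q (g z)}"
    using assms unfolding bij_betw_def by auto
  moreover have "inj_on g {z\<in>V. Q (g z)}"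
    using assms unfolding bij_betw_def by (auto intro: inj_on_subset)
  ultimately show ?thesis by (simp add: card_image)
qed

lemma cnt_iso:
  assumes "graph_iso V E V' E'"
  shows "cnt V E P = cnt V' E' P"
proof -
  obtain g where g: "bij_betw g V V'" and ge: "\<forall>x\<in>V. \<forall>y\<in>V. E x y \<longleftrightarrow> E' (g x) (g y)"
    using assms unfolding graph_iso_def by blast
  have inj: "inj_on g V" and img: "g ` V = V'" using g bij_betw_imp_inj_on bij_betw_imp_surj_on by blast+
  have par_eq: "par V' E' (g x) (g y) = par V E x y" if "x \<in> V" "y \<in> V" for x y
  proof -
    have i1: "{z \<in> V. E' (g x) (g z) \<and> E' (g y) (g z)} = {z \<in> V. E x z \<and> E y z}"
      using ge that by auto
    have i2: "{z \<in> V. g z \<noteq> g y \<and> E' (g x) (g z) \<and> \<not> E' (g y) (g z)} = {z \<in> V. z \<noteq> y \<and> E x z \<and> \<not> E y z}"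
      using ge that inj unfolding inj_on_def by auto
    have i3: "{z \<in> V. g z \<noteq> g x \<and> E' (g y) (g z) \<and> \<not> E' (g x) (g z)} = {z \<in> V. z \<noteq> x \<and> E y z \<and> \<not> E x z}"
      using ge that inj unfolding inj_on_def by auto
    show ?thesis unfolding par_def
      using card_bij_filter[OF g] i1 i2 i3 by simp
  qed
  let ?h = "\<lambda>e. (g (fst e), g (snd e))"
  have "{e \<in> edges V' E'. P (par V' E' (fst e) (snd e))} = ?h ` {e \<in> edges V E. P (par V E (fst e) (snd e))}"
  proof
    show "?h ` {e \<in> edges V E. P (par V E (fst e) (snd e))} \<subseteq> {e \<in> edges V' E'. P (par V' E' (fst e) (snd e))}"
      using ge par_eq img unfolding edges_def by auto
  next
    show "{e \<in> edges V' E'. P (par V' E' (fst e) (snd e))} \<subseteq> ?h ` {e \<in> edges V E. P (par V E (fst e) (snd e))}"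
    proof
      fix e assume e: "e \<in> {e \<in> edges V' E'. P (par V' E' (fst e) (snd e))}"
      obtain a b where ab: "e = (a,b)" by (cases e)
      have "a \<in> V'" "b \<in> V'" using e ab unfolding edges_def by auto
      then obtain x y where xy: "x \<in> V" "y \<in> V" "a = g x" "b = g y" using img by blast
      have "(x,y) \<in> {e \<in> edges V E. P (par V E (fst e) (snd e))}"
        using e ab xy ge par_eq unfolding edges_def by auto
      then show "e \<in> ?h ` {e \<in> edges V E. P (par V E (fst e) (snd e))}"
        using ab xy by force
    qed
  qed
  moreover have "inj_on ?h {e \<in> edges V E. P (par V E (fst e) (snd e))}"
    using inj unfolding inj_on_def edges_def by auto
  ultimately show ?thesis unfolding cnt_def by (simp add: card_image)
qed


lemma card3_union:
  assumes "finite U" "A \<subseteq> U" "B \<subseteq> U" "C \<subseteq> U" "A\<inter>B={}" "A\<inter>C={}" "B\<inter>C={}"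
  shows "card (A \<union> B \<union> C) = card A + card B + card C"
proof -
  have f: "finite A" "finite B" "finite C" using assms finite_subset by blast+
  have "card (A \<union> B) = card A + card B" using f assms card_Un_disjoint by blast
  moreover have "(A \<union> B) \<inter> C = {}" using assms by blast
  ultimately show ?thesis using f card_Un_disjoint[of "A \<union> B" C] by simp
qed

lemma card3_le:
  assumes "finite U" "A \<subseteq> U" "B \<subseteq> U" "C \<subseteq> U" "A\<inter>B={}" "A\<inter>C={}" "B\<inter>C={}"
  shows "card A + card B + card C \<le> card U"
proof -
  have "card (A \<union> B \<union> C) \<le> card U" using assms by (intro card_mono) auto
  then show ?thesis using card3_union[OF assms] by simp
qed

lemma filter_const_card:
  assumes "\<And>w. w \<in> A \<Longrightarrow> Q w = c"
  shows "card {w\<in>A. Q w} = (if c then card A else 0)"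
proof -
  have "{w\<in>A. Q w} = (if c then A else {})" using assms by auto
  then show ?thesis by simp
qed

lemma count4:
  assumes "finite U" "A \<subseteq> U" "B \<subseteq> U" "C \<subseteq> U" "A\<inter>B={}" "A\<inter>C={}" "B\<inter>C={}"
  shows "card {w\<in>U. P (card (A-{w}), card (B-{w}), card (C-{w}))} =
    (if P (card A, card B, card C) then card U - card A - card B - card C else 0) +
    (if P (card A - 1, card B, card C) then card A else 0) +
    (if P (card A, card B - 1, card C) then card B else 0) +
    (if P (card A, card B, card C - 1) then card C else 0)"
proof -
  let ?Q = "\<lambda>w. P (card (A-{w}), card (B-{w}), card (C-{w}))"
  define R where "R = U - (A \<union> B \<union> C)"
  have f: "finite A" "finite B" "finite C" "finite R" using assms finite_subset R_def by auto
  have split: "{w\<in>U. ?Q w} = {w\<in>A. ?Q w} \<union> {w\<in>B. ?Q w} \<union> {w\<in>C. ?Q w} \<union> {w\<in>R. ?Q w}"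
    using assms R_def by auto
  have cA: "card {w\<in>A. ?Q w} = (if P (card A - 1, card B, card C) then card A else 0)"
  proof (rule filter_const_card)
    fix w assume w: "w \<in> A"
    then have "w \<notin> B" "w \<notin> C" using assms by auto
    then show "?Q w = P (card A - 1, card B, card C)" using w f by simp
  qed
  have cB: "card {w\<in>B. ?Q w} = (if P (card A, card B - 1, card C) then card B else 0)"
  proof (rule filter_const_card)
    fix w assume w: "w \<in> B"
    then have "w \<notin> A" "w \<notin> C" using assms by auto
    then show "?Q w = P (card A, card B - 1, card C)" using w f by simp
  qed
  have cC: "card {w\<in>C. ?Q w} = (if P (card A, card B, card C - 1) then card C else 0)"
  proof (rule filter_const_card)
    fix w assume w: "w \<in> C"
    then have "w \<notin> A" "w \<notin> B" using assms by auto
    then show "?Q w = P (card A, card B, card C - 1)" using w f by simp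
  qed
  have cR: "card {w\<in>R. ?Q w} = (if P (card A, card B, card C) then card R else 0)"
  proof (rule filter_const_card)
    fix w assume w: "w \<in> R"
    then have "w \<notin> A" "w \<notin> B" "w \<notin> C" using R_def by auto
    then show "?Q w = P (card A, card B, card C)" by simp
  qed
  have cardR: "card R = card U - card A - card B - card C"
  proof -
    have "card R = card U - card (A \<union> B \<union> C)"
      unfolding R_def using assms by (intro card_Diff_subset) (auto intro: finite_subset)
    then show ?thesis using card3_union[OF assms] by simp
  qed
  have d1: "{w\<in>A. ?Q w} \<inter> {w\<in>B. ?Q w} = {}" "({w\<in>A. ?Q w} \<union> {w\<in>B. ?Q w}) \<inter> {w\<in>C. ?Q w} = {}"
     "({w\<in>A. ?Q w} \<union> {w\<in>B. ?Q w} \<union> {w\<in>C. ?Q w}) \<inter> {w\<in>R. ?Q w} = {}"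
    using assms R_def by auto
  have "card {w\<in>U. ?Q w} = card {w\<in>A. ?Q w} + card {w\<in>B. ?Q w} + card {w\<in>C. ?Q w} + card {w\<in>R. ?Q w}"
    unfolding split using f d1 by (simp add: card_Un_disjoint)
  then show ?thesis using cA cB cC cR cardR by simp
qed


definition fP :: "nat \<Rightarrow> (nat \<times> nat \<times> nat \<Rightarrow> bool) \<Rightarrow> nat \<times> nat \<times> nat \<Rightarrow> nat" where
  "fP n P p = (case p of (a,b,c) \<Rightarrow>
    (if P (a, b, c) then n - 2 - a - b - c else 0) +
    (if P (a - 1, b, c) then a else 0) +
    (if P (a, b - 1, c) then b else 0) +
    (if P (a, b, c - 1) then c else 0))"

lemma sg_facts:
  assumes "simple_graph V E"
  shows "finite V" "\<And>x y. E x y \<Longrightarrow> x \<in> V" "\<And>x y. E x y \<Longrightarrow> y \<in> V"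
    "\<And>x y. E x y \<Longrightarrow> E y x" "\<And>x. \<not> E x x"
  using assms unfolding simple_graph_def by blast+

lemma par_bound:
  assumes "simple_graph V E" "x \<in> V" "y \<in> V" "E x y"
  shows "(case par V E x y of (a,b,c) \<Rightarrow> a + b + c) \<le> card V - 2"
proof -
  have sg: "finite V" "\<And>x. \<not> E x x" using sg_facts[OF assms(1)] by auto
  have xy: "x \<noteq> y" using sg assms by auto
  have "card {z \<in> V. E x z \<and> E y z} + card {z \<in> V. z \<noteq> y \<and> E x z \<and> \<not> E y z} + card {z \<in> V. z \<noteq> x \<and> E y z \<and> \<not> E x z} \<le> card (V - {x,y})"
    by (rule card3_le) (use sg in auto)
  moreover have "card (V - {x,y}) = card V - 2" using assms xy sg by (simp add: card_Diff_subset)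
  ultimately show ?thesis unfolding par_def by simp
qed

lemma edge_count:
  assumes "simple_graph V E" "x \<in> V" "y \<in> V" "E x y"
  shows "card {w\<in>V. (x,y) \<in> {e \<in> edges (V-{w}) (del_edges E w). P (par (V-{w}) (del_edges E w) (fst e) (snd e))}}
     = fP (card V) P (par V E x y)"
proof -
  have sg: "finite V" "\<And>x. \<not> E x x" using sg_facts[OF assms(1)] by auto
  have xy: "x \<noteq> y" using sg assms by auto
  define A where "A = {z \<in> V. E x z \<and> E y z}"
  define B where "B = {z \<in> V. z \<noteq> y \<and> E x z \<and> \<not> E y z}"
  define C where "C = {z \<in> V. z \<noteq> x \<and> E y z \<and> \<not> E x z}"
  have parw: "par (V-{w}) (del_edges E w) x y = (card (A-{w}), card (B-{w}), card (C-{w}))"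
    if "w \<noteq> x" "w \<noteq> y" for w
  proof -
    have "{z \<in> V-{w}. del_edges E w x z \<and> del_edges E w y z} = A - {w}"
      "{z \<in> V-{w}. z \<noteq> y \<and> del_edges E w x z \<and> \<not> del_edges E w y z} = B - {w}"
      "{z \<in> V-{w}. z \<noteq> x \<and> del_edges E w y z \<and> \<not> del_edges E w x z} = C - {w}"
      unfolding A_def B_def C_def del_edges_def using that by auto
    then show ?thesis unfolding par_def by simp
  qed
  have "{w\<in>V. (x,y) \<in> {e \<in> edges (V-{w}) (del_edges E w). P (par (V-{w}) (del_edges E w) (fst e) (snd e))}}
     = {w \<in> V - {x,y}. P (card (A-{w}), card (B-{w}), card (C-{w}))}"
    using assms parw unfolding edges_def del_edges_def by auto
  moreover have "card {w \<in> V - {x,y}. P (card (A-{w}), card (B-{w}), card (C-{w}))} =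
    (if P (card A, card B, card C) then card (V - {x,y}) - card A - card B - card C else 0) +
    (if P (card A - 1, card B, card C) then card A else 0) +
    (if P (card A, card B - 1, card C) then card B else 0) +
    (if P (card A, card B, card C - 1) then card C else 0)"
    by (rule count4) (use sg in \<open>auto simp: A_def B_def C_def\<close>)
  moreover have "card (V - {x,y}) = card V - 2" using assms xy sg by (simp add: card_Diff_subset)
  ultimately show ?thesis unfolding fP_def par_def A_def B_def C_def by simp
qed

lemma finite_edges: "finite V \<Longrightarrow> finite (edges V E)"
  by (rule finite_subset[of _ "V \<times> V"]) (auto simp: edges_def)

lemma sum_cards:
  assumes "simple_graph V E"
  shows "(\<Sum>w\<in>V. cnt (V-{w}) (del_edges E w) P) = (\<Sum>e\<in>edges V E. fP (card V) P (par V E (fst e) (snd e)))"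
proof -
  have fin: "finite V" using sg_facts[OF assms] by auto
  define S where "S w = {e \<in> edges (V-{w}) (del_edges E w). P (par (V-{w}) (del_edges E w) (fst e) (snd e))}" for w
  have sub0: "edges (V-{w}) (del_edges E w) \<subseteq> edges V E" for w
    unfolding edges_def del_edges_def by auto
  have sub: "S w \<subseteq> edges V E" for w unfolding S_def using sub0[of w] by blast
  have fe: "finite (edges V E)" using finite_edges[OF fin] .
  have "cnt (V-{w}) (del_edges E w) P = (\<Sum>e\<in>edges V E. if e \<in> S w then 1 else 0)" for w
  proof -
    have "cnt (V-{w}) (del_edges E w) P = card {e \<in> edges V E. e \<in> S w}"
      proof -
      have "{e \<in> edges V E. e \<in> S w} = S w" using sub[of w] by blast
      then show ?thesis unfolding cnt_def S_def by simp
    qed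
    also have "\<dots> = (\<Sum>e\<in>{e \<in> edges V E. e \<in> S w}. 1)" by simp
    also have "\<dots> = (\<Sum>e\<in>edges V E. if e \<in> S w then 1 else 0)" using fe by (rule sum.inter_filter)
    finally show ?thesis .
  qed
  then have "(\<Sum>w\<in>V. cnt (V-{w}) (del_edges E w) P) = (\<Sum>w\<in>V. \<Sum>e\<in>edges V E. if e \<in> S w then 1 else 0)"
    by simp
  also have "\<dots> = (\<Sum>e\<in>edges V E. \<Sum>w\<in>V. if e \<in> S w then 1 else 0)" by (rule sum.swap)
  also have "\<dots> = (\<Sum>e\<in>edges V E. card {w \<in> V. e \<in> S w})"
  proof (rule sum.cong[OF refl])
    fix e
    have "(\<Sum>w\<in>V. if e \<in> S w then 1 else 0) = (\<Sum>w\<in>{w \<in> V. e \<in> S w}. 1)"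
      using fin by (rule sum.inter_filter[symmetric])
    then show "(\<Sum>w\<in>V. if e \<in> S w then 1 else 0) = card {w \<in> V. e \<in> S w}" by (simp only: card_eq_sum)
  qed
  also have "\<dots> = (\<Sum>e\<in>edges V E. fP (card V) P (par V E (fst e) (snd e)))"
  proof (rule sum.cong[OF refl])
    fix e assume e: "e \<in> edges V E"
    obtain x y where exy: "e = (x,y)" by (cases e)
    have "x \<in> V" "y \<in> V" "E x y" using e exy unfolding edges_def by auto
    from edge_count[OF assms this, of P] show "card {w \<in> V. e \<in> S w} = fP (card V) P (par V E (fst e) (snd e))"
      unfolding S_def exy by simp
  qed
  finally show ?thesis .
qed


lemma deck_sum:
  assumes "same_deck V E W F"
  shows "(\<Sum>w\<in>V. cnt (V-{w}) (del_edges E w) P) = (\<Sum>w\<in>W. cnt (W-{w}) (del_edges F w) P)"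
proof -
  obtain f where f: "bij_betw f V W"
    and iso: "\<forall>v\<in>V. graph_iso (V - {v}) (del_edges E v) (W - {f v}) (del_edges F (f v))"
    using assms unfolding same_deck_def by blast
  have "(\<Sum>w\<in>V. cnt (V-{w}) (del_edges E w) P) = (\<Sum>w\<in>V. cnt (W-{f w}) (del_edges F (f w)) P)"
  proof (rule sum.cong[OF refl])
    fix v assume v: "v \<in> V"
    show "cnt (V-{v}) (del_edges E v) P = cnt (W-{f v}) (del_edges F (f v)) P"
      using cnt_iso[OF iso[rule_format, OF v]] .
  qed
  also have "\<dots> = (\<Sum>w\<in>W. cnt (W-{w}) (del_edges F w) P)"
    using sum.reindex_bij_betw[OF f, of "\<lambda>w. cnt (W-{w}) (del_edges F w) P"] by simp
  finally show ?thesis .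
qed

lemma sum_if_const:
  assumes "finite X"
  shows "(\<Sum>e\<in>X. if Q e then c else 0) = c * card {e\<in>X. Q e}"
proof -
  have "(\<Sum>e\<in>X. if Q e then c else 0) = (\<Sum>e\<in>{e\<in>X. Q e}. c)"
    using assms by (rule sum.inter_filter[symmetric])
  then show ?thesis by simp
qed

lemma fP_eq:
  "fP n (\<lambda>p. p = (k1,k2,k3)) p =
    (if p = (k1,k2,k3) then n - 2 - (k1+k2+k3) else 0) +
    (if p = (Suc k1,k2,k3) then Suc k1 else 0) +
    (if p = (k1,Suc k2,k3) then Suc k2 else 0) +
    (if p = (k1,k2,Suc k3) then Suc k3 else 0)"
proof -
  obtain a b c where p: "p = (a,b,c)" by (cases p)
  have h1: "(if (a,b,c) = (k1,k2,k3) then n - 2 - a - b - c else 0) = (if (a,b,c) = (k1,k2,k3) then n - 2 - (k1+k2+k3) else 0)"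
    by auto
  have h2: "(if (a - 1,b,c) = (k1,k2,k3) then a else 0) = (if (a,b,c) = (Suc k1,k2,k3) then Suc k1 else 0)"
    by (cases a) auto
  have h3: "(if (a,b - 1,c) = (k1,k2,k3) then b else 0) = (if (a,b,c) = (k1,Suc k2,k3) then Suc k2 else 0)"
    by (cases b) auto
  have h4: "(if (a,b,c - 1) = (k1,k2,k3) then c else 0) = (if (a,b,c) = (k1,k2,Suc k3) then Suc k3 else 0)"
    by (cases c) auto
  show ?thesis unfolding p fP_def prod.case h1 h2 h3 h4 by (rule refl)
qed

lemma dav_rec:
  assumes "simple_graph V E"
  shows "(\<Sum>w\<in>V. cnt (V-{w}) (del_edges E w) (\<lambda>p. p = (k1,k2,k3))) =
     (card V - 2 - (k1+k2+k3)) * dav V E k1 k2 k3 + Suc k1 * dav V E (Suc k1) k2 k3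
     + Suc k2 * dav V E k1 (Suc k2) k3 + Suc k3 * dav V E k1 k2 (Suc k3)"
proof -
  have fe: "finite (edges V E)" using finite_edges sg_facts[OF assms] by blast
  let ?p = "\<lambda>e. par V E (fst e) (snd e)"
  have "(\<Sum>w\<in>V. cnt (V-{w}) (del_edges E w) (\<lambda>p. p = (k1,k2,k3))) =
     (\<Sum>e\<in>edges V E. (if ?p e = (k1,k2,k3) then card V - 2 - (k1+k2+k3) else 0) +
    (if ?p e = (Suc k1,k2,k3) then Suc k1 else 0) +
    (if ?p e = (k1,Suc k2,k3) then Suc k2 else 0) +
    (if ?p e = (k1,k2,Suc k3) then Suc k3 else 0))"
    unfolding sum_cards[OF assms] fP_eq by simp
  also have "\<dots> = (card V - 2 - (k1+k2+k3)) * dav V E k1 k2 k3 + Suc k1 * dav V E (Suc k1) k2 k3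
     + Suc k2 * dav V E k1 (Suc k2) k3 + Suc k3 * dav V E k1 k2 (Suc k3)"
    unfolding sum.distrib sum_if_const[OF fe] dav_cnt cnt_def by simp
  finally show ?thesis .
qed

definition Ms :: "'a set \<Rightarrow> ('a \<Rightarrow> 'a \<Rightarrow> bool) \<Rightarrow> nat \<Rightarrow> nat" where
  "Ms V E s = cnt V E (\<lambda>(a,b,c). a + b + c = s)"

lemma fP_Ms:
  "fP n (\<lambda>(a,b,c). a + b + c = s) p =
    (if (case p of (a,b,c) \<Rightarrow> a + b + c = s) then n - 2 - s else 0) +
    (if (case p of (a,b,c) \<Rightarrow> a + b + c = Suc s) then Suc s else 0)"
proof -
  obtain a b c where p: "p = (a,b,c)" by (cases p)
  have h1: "(if a + b + c = s then n - 2 - a - b - c else 0) = (if a + b + c = s then n - 2 - s else 0)"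
    by auto
  have h2: "(if a - 1 + b + c = s then a else 0) + (if a + (b - 1) + c = s then b else 0)
     + (if a + b + (c - 1) = s then c else 0) = (if a + b + c = Suc s then Suc s else 0)"
    by (cases a; cases b; cases c) auto
  show ?thesis unfolding p fP_def prod.case using h1 h2 by (simp add: add.assoc)
qed

lemma Ms_rec:
  assumes "simple_graph V E"
  shows "(\<Sum>w\<in>V. cnt (V-{w}) (del_edges E w) (\<lambda>(a,b,c). a + b + c = s)) =
     (card V - 2 - s) * Ms V E s + Suc s * Ms V E (Suc s)"
proof -
  have fe: "finite (edges V E)" using finite_edges sg_facts[OF assms] by blast
  show ?thesis
    unfolding sum_cards[OF assms] unfolding fP_Ms sum.distrib sum_if_const[OF fe] unfolding Ms_def cnt_def
    by simp
qed

lemma E_rec: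
  assumes "simple_graph V E"
  shows "(\<Sum>w\<in>V. cnt (V-{w}) (del_edges E w) (\<lambda>_. True)) = (card V - 2) * cnt V E (\<lambda>_. True)"
proof -
  have fe: "finite (edges V E)" using finite_edges sg_facts[OF assms] by blast
  have "(\<Sum>e\<in>edges V E. fP (card V) (\<lambda>_. True) (par V E (fst e) (snd e))) = (\<Sum>e\<in>edges V E. card V - 2)"
  proof (rule sum.cong[OF refl])
    fix e assume e: "e \<in> edges V E"
    obtain x y where exy: "e = (x,y)" by (cases e)
    have "x \<in> V" "y \<in> V" "E x y" using e exy unfolding edges_def by auto
    from par_bound[OF assms this] show "fP (card V) (\<lambda>_. True) (par V E (fst e) (snd e)) = card V - 2"
      unfolding exy by (cases "par V E x y") (auto simp: fP_def)
  qed
  then show ?thesis unfolding sum_cards[OF assms] unfolding cnt_def by simp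
qed



lemma dav_le_Ms:
  assumes "finite V"
  shows "dav V E k1 k2 k3 \<le> Ms V E (k1+k2+k3)"
proof -
  have fin: "finite {e \<in> edges V E. (case par V E (fst e) (snd e) of (a,b,c) \<Rightarrow> a + b + c = k1+k2+k3)}"
    by (rule finite_subset[OF _ finite_edges[OF assms]]) auto
  show ?thesis unfolding dav_cnt Ms_def cnt_def
    by (rule card_mono[OF fin]) auto
qed

lemma par_nb:
  assumes "simple_graph V E" "x \<in> V" "y \<in> V" "E x y"
  shows "(case par V E x y of (a,b,c) \<Rightarrow> a + b + c) = card {z\<in>V. z \<noteq> x \<and> z \<noteq> y \<and> (E x z \<or> E y z)}"
proof -
  have sg: "finite V" "\<And>x. \<not> E x x" using sg_facts[OF assms(1)] by auto
  have "card ({z \<in> V. E x z \<and> E y z} \<union> {z \<in> V. z \<noteq> y \<and> E x z \<and> \<not> E y z} \<union> {z \<in> V. z \<noteq> x \<and> E y z \<and> \<not> E x z})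
     = card {z \<in> V. E x z \<and> E y z} + card {z \<in> V. z \<noteq> y \<and> E x z \<and> \<not> E y z} + card {z \<in> V. z \<noteq> x \<and> E y z \<and> \<not> E x z}"
    by (rule card3_union[of V]) (use sg in auto)
  moreover have "{z \<in> V. E x z \<and> E y z} \<union> {z \<in> V. z \<noteq> y \<and> E x z \<and> \<not> E y z} \<union> {z \<in> V. z \<noteq> x \<and> E y z \<and> \<not> E x z}
     = {z\<in>V. z \<noteq> x \<and> z \<noteq> y \<and> (E x z \<or> E y z)}" using sg by auto
  ultimately show ?thesis unfolding par_def by simp
qed

lemma Ms_witness:
  assumes "simple_graph V E" "Ms V E s \<noteq> 0"
  obtains x y where "x \<in> V" "y \<in> V" "E x y" "card {z\<in>V. z \<noteq> x \<and> z \<noteq> y \<and> (E x z \<or> E y z)} = s"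
proof -
  have "{e \<in> edges V E. (case par V E (fst e) (snd e) of (a,b,c) \<Rightarrow> a + b + c = s)} \<noteq> {}"
    using assms(2) unfolding Ms_def cnt_def by (metis card.empty)
  then obtain x y where h: "x \<in> V" "y \<in> V" "E x y" "(case par V E x y of (a,b,c) \<Rightarrow> a + b + c = s)"
    unfolding edges_def by auto
  have "(case par V E x y of (a,b,c) \<Rightarrow> a + b + c) = s" using h(4) by (cases "par V E x y") auto
  with par_nb[OF assms(1) h(1-3)] have "card {z\<in>V. z \<noteq> x \<and> z \<noteq> y \<and> (E x z \<or> E y z)} = s" by simp
  then show ?thesis by (rule that[OF h(1-3)])
qed

lemma closed_reach:
  assumes "r\<^sup>*\<^sup>* a b" "a \<in> S" "\<And>u v. r u v \<Longrightarrow> u \<in> S \<Longrightarrow> v \<in> S"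
  shows "b \<in> S"
  using assms(1)
proof (induction rule: rtranclp_induct)
  case base show ?case using assms(2) .
next
  case (step y z) then show ?case using assms(3) by blast
qed

lemma Ms0_conn:
  assumes "simple_graph V E" "connected_graph V E" "card V \<ge> 3"
  shows "Ms V E 0 = 0"
proof (rule ccontr)
  assume "Ms V E 0 \<noteq> 0"
  then obtain x y where xy: "x \<in> V" "y \<in> V" "E x y" and c: "card {z\<in>V. z \<noteq> x \<and> z \<noteq> y \<and> (E x z \<or> E y z)} = 0"
    using Ms_witness[OF assms(1)] by blast
  have fin: "finite V" using sg_facts[OF assms(1)] by auto
  have emp: "\<And>z. z \<in> V \<Longrightarrow> z \<noteq> x \<Longrightarrow> z \<noteq> y \<Longrightarrow> \<not> E x z \<and> \<not> E y z"
    using c fin by auto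
  have "card (V - {x,y}) > 0"
  proof -
    have "card (V - {x,y}) \<ge> card V - card {x,y}" by (rule diff_card_le_card_Diff) simp
    moreover have "card {x,y} \<le> 2" by (simp add: card_insert_le_m1)
    ultimately show ?thesis using assms(3) by linarith
  qed
  then obtain z where z: "z \<in> V" "z \<noteq> x" "z \<noteq> y" by (metis card.empty DiffE insertCI less_irrefl subsetI subset_empty)
  have "E\<^sup>*\<^sup>* x z" using assms(2) xy z unfolding connected_graph_def by blast
  moreover have "\<And>u v. E u v \<Longrightarrow> u \<in> {x,y} \<Longrightarrow> v \<in> {x,y}"
    using emp sg_facts[OF assms(1)] by blast
  ultimately have "z \<in> {x,y}" using closed_reach[of E x z "{x,y}"] by blast
  then show False using z by auto
qed

lemma not_both:
  assumes "simple_graph W F" "card W \<ge> 3"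
  shows "Ms W F 0 = 0 \<or> Ms W F (card W - 2) = 0"
proof (rule ccontr)
  assume "\<not> ?thesis"
  then have m0: "Ms W F 0 \<noteq> 0" and m1: "Ms W F (card W - 2) \<noteq> 0" by auto
  have sg: "finite W" "\<And>x y. F x y \<Longrightarrow> F y x" "\<And>x. \<not> F x x" "\<And>x y. F x y \<Longrightarrow> x \<in> W"
    "\<And>x y. F x y \<Longrightarrow> y \<in> W" using sg_facts[OF assms(1)] by auto
  obtain a b where ab: "a \<in> W" "b \<in> W" "F a b" and c: "card {z\<in>W. z \<noteq> a \<and> z \<noteq> b \<and> (F a z \<or> F b z)} = 0"
    using Ms_witness[OF assms(1) m0] by blast
  have emp: "\<And>z. z \<in> W \<Longrightarrow> z \<noteq> a \<Longrightarrow> z \<noteq> b \<Longrightarrow> \<not> F a z \<and> \<not> F b z"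
    using c sg by auto
  obtain x y where xy: "x \<in> W" "y \<in> W" "F x y" and c2: "card {z\<in>W. z \<noteq> x \<and> z \<noteq> y \<and> (F x z \<or> F y z)} = card W - 2"
    using Ms_witness[OF assms(1) m1] by blast
  have xny: "x \<noteq> y" using xy sg by auto
  have sub: "{z\<in>W. z \<noteq> x \<and> z \<noteq> y \<and> (F x z \<or> F y z)} \<subseteq> W - {x,y}" by auto
  have cw: "card (W - {x,y}) = card W - 2" using xy xny sg by (simp add: card_Diff_subset)
  have "{z\<in>W. z \<noteq> x \<and> z \<noteq> y \<and> (F x z \<or> F y z)} = W - {x,y}"
    using card_subset_eq[OF _ sub] sg c2 cw by auto
  then have dom: "\<And>z. z \<in> W \<Longrightarrow> z \<noteq> x \<Longrightarrow> z \<noteq> y \<Longrightarrow> F x z \<or> F y z" by blast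
  have "card (W - {a,b}) > 0"
  proof -
    have "card (W - {a,b}) \<ge> card W - card {a,b}" by (rule diff_card_le_card_Diff) simp
    moreover have "card {a,b} \<le> 2" by (simp add: card_insert_le_m1)
    ultimately show ?thesis using assms(2) by linarith
  qed
  then obtain z where z: "z \<in> W" "z \<noteq> a" "z \<noteq> b" by (metis card.empty DiffE insertCI less_irrefl subsetI subset_empty)
  have "x \<in> {a,b}"
  proof (rule ccontr)
    assume xn: "x \<notin> {a,b}"
    show False
    proof (cases "y \<in> {a,b}")
      case True
      have "\<not> F a x \<and> \<not> F b x" using emp[of x] xn xy by simp
      moreover have "F y x" using sg(2) xy by blast
      ultimately show ?thesis using True by blast
    next
      case False
      then have "a \<noteq> x" "a \<noteq> y" using xn by auto
      then have "F x a \<or> F y a" using dom[of a] ab by blast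
      then have "F a x \<or> F a y" using sg(2) by blast
      moreover have "\<not> F a x" using emp[of x] xn xy by simp
      moreover have "\<not> F a y" using emp[of y] False xy by simp
      ultimately show ?thesis by blast
    qed
  qed
  moreover have "y \<in> {a,b}"
  proof (rule ccontr)
    assume yn: "y \<notin> {a,b}"
    have "\<not> F a y \<and> \<not> F b y" using emp[of y] yn xy by simp
    then show False using calculation xy by blast
  qed
  ultimately have "{x,y} = {a,b}" using xny by auto
  then have "z \<noteq> x" "z \<noteq> y" "x = a \<or> x = b" "y = a \<or> y = b" using z by auto
  then show False using dom[of z] emp[of z] z by blast
qed

lemma dom_vertex:
  assumes "simple_graph V E" "domination_number V E \<noteq> 2" "Ms V E (card V - 2) \<noteq> 0" "V \<noteq> {}"
  shows "\<exists>u\<in>V. \<forall>v\<in>V. v = u \<or> E v u"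
proof -
  have sg: "finite V" "\<And>x y. E x y \<Longrightarrow> E y x" "\<And>x. \<not> E x x"
    using sg_facts[OF assms(1)] by auto
  obtain x y where xy: "x \<in> V" "y \<in> V" "E x y" and c2: "card {z\<in>V. z \<noteq> x \<and> z \<noteq> y \<and> (E x z \<or> E y z)} = card V - 2"
    using Ms_witness[OF assms(1) assms(3)] by blast
  have xny: "x \<noteq> y" using xy sg by auto
  have sub: "{z\<in>V. z \<noteq> x \<and> z \<noteq> y \<and> (E x z \<or> E y z)} \<subseteq> V - {x,y}" by auto
  have cw: "card (V - {x,y}) = card V - 2" using xy xny sg by (simp add: card_Diff_subset)
  have "{z\<in>V. z \<noteq> x \<and> z \<noteq> y \<and> (E x z \<or> E y z)} = V - {x,y}"
    using card_subset_eq[OF _ sub] sg c2 cw by auto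
  then have "dominating_set V E {x,y}" unfolding dominating_set_def using xy sg(2) by blast
  then have ex: "\<exists>D. dominating_set V E D \<and> card D = 2" using xny by auto
  have le: "domination_number V E \<le> 2" unfolding domination_number_def
    by (rule Least_le) (use ex in blast)
  have "\<exists>D. dominating_set V E D \<and> card D = domination_number V E"
    unfolding domination_number_def by (rule LeastI_ex) (use ex in blast)
  then obtain D where D: "dominating_set V E D" "card D < 2" using le assms(2) by fastforce
  have Dsub: "D \<subseteq> V" using D unfolding dominating_set_def by auto
  have "finite D" using Dsub sg finite_subset by blast
  then consider "D = {}" | u where "D = {u}" using D(2)
    by (metis One_nat_def card_1_singletonE card_0_eq less_2_cases)
  then show ?thesis
  proof cases
    case 1 then show ?thesis using D(1) assms(4) unfolding dominating_set_def by auto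
  next
    case (2 u) then show ?thesis using D(1) unfolding dominating_set_def by auto
  qed
qed

lemma binom_step: "(m - s) * (m choose s) = Suc s * (m choose Suc s)"
proof -
  have a: "Suc s * (m choose Suc s) = m * ((m - 1) choose (Suc s - 1))"
    by (rule times_binomial_minus1_eq) simp
  have b: "(m - s) * (m choose s) = m * ((m - 1) choose s)" by (rule binomial_absorb_comp)
  show ?thesis using a b by (simp only: diff_Suc_1)
qed
lemma rec_sol:
  fixes d :: "nat \<Rightarrow> int"
  assumes "\<And>s. int (Suc s) * d (Suc s) = - int (m - s) * d s"
  shows "d s = (-1)^s * int (m choose s) * d 0"
proof (induction s)
  case 0 then show ?case by simp
next
  case (Suc s)
  have "int (Suc s) * d (Suc s) = - int (m - s) * ((-1)^s * int (m choose s) * d 0)"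
    using assms[of s] Suc by simp
  also have "\<dots> = (-1)^(Suc s) * int ((m - s) * (m choose s)) * d 0" by simp
  also have "\<dots> = int (Suc s) * ((-1)^(Suc s) * int (m choose Suc s) * d 0)"
    unfolding binom_step by (simp add: algebra_simps)
  finally have "int (Suc s) * d (Suc s) = int (Suc s) * ((-1)^(Suc s) * int (m choose Suc s) * d 0)" .
  then show ?case by (metis mult_cancel_left of_nat_eq_0_iff nat.distinct(1))
qed



lemma edges_del:
  assumes "simple_graph V E" "w \<in> V"
  shows "card (edges V E) = card (edges (V-{w}) (del_edges E w)) + 2 * card {y\<in>V. E w y}"
proof -
  have sg: "finite V" "\<And>x y. E x y \<Longrightarrow> E y x" "\<And>x. \<not> E x x" "\<And>x y. E x y \<Longrightarrow> x \<in> V"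
    "\<And>x y. E x y \<Longrightarrow> y \<in> V" using sg_facts[OF assms(1)] by auto
  define N where "N = {y\<in>V. E w y}"
  have fN: "finite N" using sg N_def by auto
  have wN: "w \<notin> N" using sg N_def by auto
  have eq: "edges V E = edges (V-{w}) (del_edges E w) \<union> (Pair w ` N) \<union> ((\<lambda>x. (x,w)) ` N)"
  proof
    show "edges V E \<subseteq> edges (V-{w}) (del_edges E w) \<union> (Pair w ` N) \<union> ((\<lambda>x. (x,w)) ` N)"
    proof
      fix e assume e: "e \<in> edges V E"
      obtain x y where exy: "e = (x,y)" by (cases e)
      have h: "x \<in> V" "y \<in> V" "E x y" using e exy unfolding edges_def by auto
      show "e \<in> edges (V-{w}) (del_edges E w) \<union> (Pair w ` N) \<union> ((\<lambda>x. (x,w)) ` N)"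
      proof (cases "x = w")
        case True then show ?thesis using h exy N_def by auto
      next
        case False
        show ?thesis
        proof (cases "y = w")
          case True then have "x \<in> N" using h sg(2) N_def by auto
          then show ?thesis using True exy by auto
        next
          case False2: False
          then show ?thesis using False h exy unfolding edges_def del_edges_def by auto
        qed
      qed
    qed
  next
    show "edges (V-{w}) (del_edges E w) \<union> (Pair w ` N) \<union> ((\<lambda>x. (x,w)) ` N) \<subseteq> edges V E"
      using assms(2) sg(2) unfolding edges_def del_edges_def N_def by auto
  qed
  have fe: "finite (edges (V-{w}) (del_edges E w))" using finite_edges sg(1) by blast
  have d1: "edges (V-{w}) (del_edges E w) \<inter> (Pair w ` N) = {}" unfolding edges_def by auto
  have d2: "(edges (V-{w}) (del_edges E w) \<union> (Pair w ` N)) \<inter> ((\<lambda>x. (x,w)) ` N) = {}"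
    using wN unfolding edges_def by auto
  have c1: "card (Pair w ` N) = card N" by (rule card_image) (simp add: inj_on_def)
  have c2: "card ((\<lambda>x. (x,w)) ` N) = card N" by (rule card_image) (simp add: inj_on_def)
  have "card (edges V E) = card (edges (V-{w}) (del_edges E w)) + card (Pair w ` N) + card ((\<lambda>x. (x,w)) ` N)"
    unfolding eq using fe fN d1 d2 by (simp add: card_Un_disjoint)
  then show ?thesis using c1 c2 N_def by simp
qed

lemma cnt_true: "cnt V E (\<lambda>_. True) = card (edges V E)" by (simp add: cnt_def)

theorem theorem18:
  fixes V :: "'a set" and E :: "'a \<Rightarrow> 'a \<Rightarrow> bool"
    and W :: "'b set" and F :: "'b \<Rightarrow> 'b \<Rightarrow> bool"
  assumes "simple_graph V E" and "connected_graph V E" and "card V \<ge> 12"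
    and "domination_number V E \<noteq> 2"
    and "simple_graph W F" and "same_deck V E W F"
  shows "(\<forall>k1 k2 k3. k1 + k2 + k3 \<le> card V - 3 \<longrightarrow> dav W F k1 k2 k3 = dav V E k1 k2 k3)
       \<and> (\<forall>k1 k. k1 + 2 * k \<le> card V - 3 \<longrightarrow> dav W F k1 k k = dav V E k1 k k)"
proof -
  obtain f where f: "bij_betw f V W"
    and iso: "\<forall>v\<in>V. graph_iso (V - {v}) (del_edges E v) (W - {f v}) (del_edges F (f v))"
    using assms(6) unfolding same_deck_def by blast
  have n: "card W = card V" using bij_betw_same_card[OF f] by simp
  have sgV: "finite V" "\<And>x y. E x y \<Longrightarrow> E y x" "\<And>x. \<not> E x x" "\<And>x y. E x y \<Longrightarrow> x \<in> V"
    "\<And>x y. E x y \<Longrightarrow> y \<in> V" using sg_facts[OF assms(1)] by auto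
  have sgW: "finite W" "\<And>x y. F x y \<Longrightarrow> F y x" "\<And>x. \<not> F x x" "\<And>x y. F x y \<Longrightarrow> x \<in> W"
    "\<And>x y. F x y \<Longrightarrow> y \<in> W" using sg_facts[OF assms(5)] by auto
  have Vne: "V \<noteq> {}" using assms(3) by auto
  have main: "\<forall>k1 k2 k3. k1 + k2 + k3 \<le> card V - 3 \<longrightarrow> dav W F k1 k2 k3 = dav V E k1 k2 k3"
  proof (cases "\<exists>u\<in>V. \<forall>v\<in>V. v = u \<or> E v u")
    case True
    then obtain u where u: "u \<in> V" "\<forall>v\<in>V. v = u \<or> E v u" by blast
    have fu: "f u \<in> W" using f u bij_betw_apply by metis
    have "(card V - 2) * cnt V E (\<lambda>_. True) = (card V - 2) * cnt W F (\<lambda>_. True)"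
      using E_rec[OF assms(1)] E_rec[OF assms(5)] deck_sum[OF assms(6), of "\<lambda>_. True"] n by metis
    then have "cnt V E (\<lambda>_. True) = cnt W F (\<lambda>_. True)" using assms(3) by simp
    then have ecount: "card (edges V E) = card (edges W F)" unfolding cnt_true .
    have cardu: "card (edges (V-{u}) (del_edges E u)) = card (edges (W-{f u}) (del_edges F (f u)))"
      using cnt_iso[OF iso[rule_format, OF u(1)], of "\<lambda>_. True"] unfolding cnt_true .
    have Nu: "{y\<in>V. E u y} = V - {u}" using u sgV(2,3) by auto
    have degu: "card {y\<in>V. E u y} = card V - 1" unfolding Nu using u sgV(1) by simp
    have degfu: "card {y\<in>W. F (f u) y} = card V - 1"
      using edges_del[OF assms(1) u(1)] edges_del[OF assms(5) fu] ecount cardu degu by simp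
    have subH: "{y\<in>W. F (f u) y} \<subseteq> W - {f u}" using sgW(3) by auto
    have "card (W - {f u}) = card V - 1" using fu sgW(1) n by simp
    then have "{y\<in>W. F (f u) y} = W - {f u}"
      using card_subset_eq[OF _ subH] sgW(1) degfu by auto
    then have domH: "\<And>y. y \<in> W \<Longrightarrow> y \<noteq> f u \<Longrightarrow> F (f u) y" by blast
    obtain g where g: "bij_betw g (V-{u}) (W-{f u})"
      and ge: "\<forall>x\<in>V-{u}. \<forall>y\<in>V-{u}. del_edges E u x y \<longleftrightarrow> del_edges F (f u) (g x) (g y)"
      using iso u(1) unfolding graph_iso_def by blast
    define h where "h = g(u := f u)"
    have "bij_betw h (V-{u}) (W-{f u})"
      using g bij_betw_cong[of "V-{u}" h g] unfolding h_def by auto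
    then have "bij_betw h ((V-{u}) \<union> {u}) ((W-{f u}) \<union> {h u})"
      by (rule notIn_Un_bij_betw[rotated 2]) (auto simp: h_def)
    moreover have "(V-{u}) \<union> {u} = V" "(W-{f u}) \<union> {h u} = W" using u fu by (auto simp: h_def)
    ultimately have hb: "bij_betw h V W" by simp
    have gin: "\<And>x. x \<in> V - {u} \<Longrightarrow> g x \<in> W - {f u}" using g bij_betw_apply by metis
    have he: "\<forall>x\<in>V. \<forall>y\<in>V. E x y \<longleftrightarrow> F (h x) (h y)"
    proof (intro ballI)
      fix x y assume x: "x \<in> V" and y: "y \<in> V"
      show "E x y \<longleftrightarrow> F (h x) (h y)"
      proof (cases "x = u")
        case xu: True
        show ?thesis
        proof (cases "y = u")
          case True then show ?thesis using xu sgV(3) sgW(3) by simp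
        next
          case False
          have "E u y" using u(2) y False sgV(2) by blast
          moreover have "F (f u) (g y)" using domH gin[of y] y False by auto
          ultimately show ?thesis using xu False unfolding h_def by simp
        qed
      next
        case xnu: False
        show ?thesis
        proof (cases "y = u")
          case True
          have "E x u" using u(2) x xnu by blast
          moreover have "F (g x) (f u)" using domH gin[of x] x xnu sgW(2) by auto
          ultimately show ?thesis using xnu True unfolding h_def by simp
        next
          case False
          have "del_edges E u x y \<longleftrightarrow> del_edges F (f u) (g x) (g y)" using ge x y xnu False by blast
          moreover have "g x \<noteq> f u" "g y \<noteq> f u" using gin[of x] gin[of y] x y xnu False by auto
          ultimately show ?thesis using xnu False unfolding h_def del_edges_def by simp
        qed
      qed
    qed
    have "graph_iso V E W F" unfolding graph_iso_def using hb he by blast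
    then show ?thesis using cnt_iso unfolding dav_cnt by metis
  next
    case False
    have MGt: "Ms V E (card V - 2) = 0" using dom_vertex[OF assms(1) assms(4) _ Vne] False by blast
    have MG0: "Ms V E 0 = 0" using Ms0_conn[OF assms(1) assms(2)] assms(3) by simp
    have rec: "(card V - 2 - s) * Ms V E s + Suc s * Ms V E (Suc s) = (card V - 2 - s) * Ms W F s + Suc s * Ms W F (Suc s)" for s
      using Ms_rec[OF assms(1), of s] Ms_rec[OF assms(5), of s] deck_sum[OF assms(6)] n by simp
    define d where "d s = int (Ms W F s) - int (Ms V E s)" for s
    have drec: "int (Suc s) * d (Suc s) = - int (card V - 2 - s) * d s" for s
    proof -
      have "int (card V - 2 - s) * int (Ms V E s) + int (Suc s) * int (Ms V E (Suc s)) = int (card V - 2 - s) * int (Ms W F s) + int (Suc s) * int (Ms W F (Suc s))"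
        using arg_cong[OF rec[of s], of int] by (simp only: of_nat_add of_nat_mult)
      then show ?thesis unfolding d_def by (simp add: algebra_simps)
    qed
    have "d (card V - 2) = (-1)^(card V - 2) * int ((card V - 2) choose (card V - 2)) * d 0"
      by (rule rec_sol) (rule drec)
    then have dd: "int (Ms W F (card V - 2)) = (-1)^(card V - 2) * int (Ms W F 0)"
      unfolding d_def using MGt MG0 by simp
    have MHt: "Ms W F (card V - 2) = 0"
      using not_both[OF assms(5)] n assms(3) dd by auto
    have down: "\<forall>k1 k2 k3. k1 + k2 + k3 + t = card V - 2 \<longrightarrow> dav W F k1 k2 k3 = dav V E k1 k2 k3" for t
    proof (induction t)
      case 0
      show ?case
      proof (intro allI impI)
        fix k1 k2 k3 assume "k1 + k2 + k3 + 0 = card V - 2"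
        then have "dav V E k1 k2 k3 = 0" "dav W F k1 k2 k3 = 0"
          using dav_le_Ms[OF sgV(1), of E k1 k2 k3] dav_le_Ms[OF sgW(1), of F k1 k2 k3] MGt MHt by auto
        then show "dav W F k1 k2 k3 = dav V E k1 k2 k3" by simp
      qed
    next
      case (Suc t)
      show ?case
      proof (intro allI impI)
        fix k1 k2 k3 assume s: "k1 + k2 + k3 + Suc t = card V - 2"
        have i1: "dav W F (Suc k1) k2 k3 = dav V E (Suc k1) k2 k3" using Suc.IH s by simp
        have i2: "dav W F k1 (Suc k2) k3 = dav V E k1 (Suc k2) k3" using Suc.IH s by simp
        have i3: "dav W F k1 k2 (Suc k3) = dav V E k1 k2 (Suc k3)" using Suc.IH s by simp
        have c: "card V - 2 - (k1+k2+k3) = Suc t" using s by simp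
        define R where "R = Suc k1 * dav V E (Suc k1) k2 k3
          + Suc k2 * dav V E k1 (Suc k2) k3 + Suc k3 * dav V E k1 k2 (Suc k3)"
        have eV: "(\<Sum>w\<in>V. cnt (V-{w}) (del_edges E w) (\<lambda>p. p = (k1,k2,k3))) = Suc t * dav V E k1 k2 k3 + R"
          using dav_rec[OF assms(1), of k1 k2 k3] unfolding c R_def by (simp only: add.assoc)
        have eW: "(\<Sum>w\<in>W. cnt (W-{w}) (del_edges F w) (\<lambda>p. p = (k1,k2,k3))) = Suc t * dav W F k1 k2 k3 + R"
          using dav_rec[OF assms(5), of k1 k2 k3] unfolding n c R_def i1 i2 i3 by (simp only: add.assoc)
        have "Suc t * dav V E k1 k2 k3 + R = Suc t * dav W F k1 k2 k3 + R"
          using eV eW deck_sum[OF assms(6), of "\<lambda>p. p = (k1,k2,k3)"] by simp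
        then have "Suc t * dav V E k1 k2 k3 = Suc t * dav W F k1 k2 k3" by simp
        then show "dav W F k1 k2 k3 = dav V E k1 k2 k3"
          using mult_left_cancel[of "Suc t"] by (metis nat.distinct(1))
      qed
    qed
    show ?thesis
    proof (intro allI impI)
      fix k1 k2 k3 assume "k1 + k2 + k3 \<le> card V - 3"
      then have "k1 + k2 + k3 + (card V - 2 - (k1 + k2 + k3)) = card V - 2" by simp
      then show "dav W F k1 k2 k3 = dav V E k1 k2 k3" using down by blast
    qed
  qed
  then show ?thesis by auto
qed

end
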